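(* Fix $\varepsilon\in(0,1)$. For every $\alpha>0$ and $k>0$, $$\limsup_{n\to\infty}\mathbb{U}^n\left(\Big||\triangle_\alpha(\sigma)|-2\varepsilon\alpha\sqrt{n\log n}\Big|\ge k\sqrt{2\varepsilon\alpha}\,(n\log n)^{1/4}\right)\le\frac{1}{k^2},$$ where $\sigma$ is distributed according to $\mathbb{U}^n$.
   Context: $\mathbb{U}^n$ is the uniform measure on $S_n$; for $\sigma\in S_n$, $\sigma(j)$ is interpreted as the position of card $j$. For fixed $\varepsilon\in(0,1)$, $D^n=[n]\cap[n(1-\varepsilon)/2,\,n(1+\varepsilon)/2]$ and, for $\alpha>0$ and $\sigma\in S_n$, $\triangle_\alpha(\sigma)=\{j\in D^n:|\sigma(j)-j|\le\alpha\sqrt{n\log n}\}$. $\log$ is the natural logarithm. *)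

theory Defs
  imports "HOL-Analysis.Analysis" "HOL-Combinatorics.Permutations"
begin

text \<open>Permutations of [n] = {1..n}; sigma j is the position of card j.\<close>

definition Dn :: "real \<Rightarrow> nat \<Rightarrow> nat set" where
  "Dn \<epsilon> n = {j \<in> {1..n}. real n * (1 - \<epsilon>) / 2 \<le> real j \<and> real j \<le> real n * (1 + \<epsilon>) / 2}"

definition tri :: "real \<Rightarrow> real \<Rightarrow> nat \<Rightarrow> (nat \<Rightarrow> nat) \<Rightarrow> nat set" where
  "tri \<epsilon> \<alpha> n \<sigma> = {j \<in> Dn \<epsilon> n. \<bar>real (\<sigma> j) - real j\<bar> \<le> \<alpha> * sqrt (real n * ln (real n))}"

definition unif_prob :: "nat \<Rightarrow> ((nat \<Rightarrow> nat) \<Rightarrow> bool) \<Rightarrow> real" where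
  "unif_prob n P = real (card {\<sigma>. \<sigma> permutes {1..n} \<and> P \<sigma>}) / real (card {\<sigma>. \<sigma> permutes {1..n}})"

end

theory Submission
  imports Defs "HOL-Real_Asymp.Real_Asymp"
begin


lemma fiber_card:
  assumes "finite T" "finite V" "f ` T \<subseteq> V"
  shows "card T = (\<Sum>v\<in>V. card {x\<in>T. f x = v})"
  using sum.group[OF assms, of "\<lambda>_. 1::nat"] by simp

lemma perm_fiber_le:
  assumes U: "finite U" "i\<in>U" "j\<in>U" "i\<noteq>j" "p\<in>U" "q\<in>U" "p\<noteq>q" "p'\<in>U" "q'\<in>U" "p'\<noteq>q'"
  shows "card {\<sigma>. \<sigma> permutes U \<and> \<sigma> i = p \<and> \<sigma> j = q} \<le> card {\<sigma>. \<sigma> permutes U \<and> \<sigma> i = p' \<and> \<sigma> j = q'}"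
proof -
  define \<tau>1 where "\<tau>1 = Transposition.transpose p p'"
  define \<tau> where "\<tau> = Transposition.transpose q' (\<tau>1 q) \<circ> \<tau>1"
  have t1: "\<tau>1 permutes U" unfolding \<tau>1_def using U(5,8) by (rule permutes_swap_id)
  have "\<tau>1 q \<in> U" using t1 U(6) by (simp add: permutes_in_image)
  then have "Transposition.transpose q' (\<tau>1 q) permutes U" using U(9) by (simp add: permutes_swap_id)
  then have tp: "\<tau> permutes U" unfolding \<tau>_def using t1 by (rule permutes_compose[rotated])
  have t1p: "\<tau>1 p = p'" unfolding \<tau>1_def by simp
  have "\<tau>1 q \<noteq> \<tau>1 p" using t1 U(7) permutes_inj by (metis injD)
  then have "\<tau>1 q \<noteq> p'" using t1p by simp
  then have e1: "\<tau> p = p'" using U(10) t1p unfolding \<tau>_def by (simp add: transpose_def)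
  have e2: "\<tau> q = q'" unfolding \<tau>_def by (simp add: transpose_def)
  have inj: "inj \<tau>" using tp permutes_inj by blast
  show ?thesis
  proof (rule card_inj_on_le[of "\<lambda>\<sigma>. \<tau> \<circ> \<sigma>"])
    show "inj_on ((\<circ>) \<tau>) {\<sigma>. \<sigma> permutes U \<and> \<sigma> i = p \<and> \<sigma> j = q}"
    proof (rule inj_onI, rule ext)
      fix x y z assume "\<tau> \<circ> x = \<tau> \<circ> y"
      then have "\<tau> (x z) = \<tau> (y z)" by (metis comp_apply)
      then show "x z = y z" using inj by (rule injD[rotated])
    qed
    show "(\<circ>) \<tau> ` {\<sigma>. \<sigma> permutes U \<and> \<sigma> i = p \<and> \<sigma> j = q} \<subseteq> {\<sigma>. \<sigma> permutes U \<and> \<sigma> i = p' \<and> \<sigma> j = q'}"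
    proof (rule image_subsetI)
      fix \<sigma> assume "\<sigma> \<in> {\<sigma>. \<sigma> permutes U \<and> \<sigma> i = p \<and> \<sigma> j = q}"
      then have s: "\<sigma> permutes U" "\<sigma> i = p" "\<sigma> j = q" by auto
      have "\<tau> \<circ> \<sigma> permutes U" using s(1) tp by (rule permutes_compose)
      then show "\<tau> \<circ> \<sigma> \<in> {\<sigma>. \<sigma> permutes U \<and> \<sigma> i = p' \<and> \<sigma> j = q'}" using s e1 e2 by simp
    qed
    show "finite {\<sigma>. \<sigma> permutes U \<and> \<sigma> i = p' \<and> \<sigma> j = q'}"
      using finite_permutations[OF U(1)] by (rule rev_finite_subset) blast
  qed
qed

lemma perm_fiber_eq:
  assumes U: "finite U" "i\<in>U" "j\<in>U" "i\<noteq>j" "p\<in>U" "q\<in>U" "p\<noteq>q" "p'\<in>U" "q'\<in>U" "p'\<noteq>q'"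
  shows "card {\<sigma>. \<sigma> permutes U \<and> \<sigma> i = p \<and> \<sigma> j = q} = card {\<sigma>. \<sigma> permutes U \<and> \<sigma> i = p' \<and> \<sigma> j = q'}"
  using perm_fiber_le[OF U] perm_fiber_le[OF U(1-4) U(8-10) U(5-7)] by (rule le_antisym)



lemma inner_count:
  assumes U: "finite U" "i\<in>U" "j\<in>U" "i\<noteq>j" "p\<in>U"
  shows "card {\<sigma>. \<sigma> permutes U \<and> \<sigma> i = p} = (\<Sum>q\<in>U-{p}. card {\<sigma>. \<sigma> permutes U \<and> \<sigma> i = p \<and> \<sigma> j = q})"
proof -
  let ?T = "{\<sigma>. \<sigma> permutes U \<and> \<sigma> i = p}"
  have fT: "finite ?T" using finite_permutations[OF U(1)] by (rule rev_finite_subset) blast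
  have "?T = {\<sigma>. \<sigma> permutes U \<and> \<sigma> i = p}" by simp
  have im: "(\<lambda>\<sigma>. \<sigma> j) ` ?T \<subseteq> U - {p}"
  proof safe
    fix \<sigma> assume "\<sigma> permutes U" "p = \<sigma> i" 
    then show "\<sigma> j \<in> U" using U by (simp add: permutes_in_image)
  next
    fix \<sigma> assume a: "\<sigma> permutes U" "\<sigma> j = \<sigma> i" 
    then have "inj \<sigma>" using permutes_inj by blast
    from injD[OF this a(2)] U(4) show False by simp
  qed
  have "card ?T = (\<Sum>q\<in>U-{p}. card {x\<in>?T. x j = q})"
    by (rule fiber_card[OF fT _ im]) (use U in auto)
  also have "\<dots> = (\<Sum>q\<in>U-{p}. card {\<sigma>. \<sigma> permutes U \<and> \<sigma> i = p \<and> \<sigma> j = q})"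
    by (intro sum.cong refl arg_cong[where f=card]) auto
  finally show ?thesis .
qed

lemma pair_count:
  assumes U: "finite U" "i\<in>U" "j\<in>U" "i\<noteq>j" "p\<in>U" "q\<in>U" "p\<noteq>q"
  shows "real (card {\<sigma>. \<sigma> permutes U \<and> \<sigma> i = p \<and> \<sigma> j = q}) * (real (card U) * (real (card U) - 1)) = fact (card U)"
proof -
  define F where "F = card {\<sigma>. \<sigma> permutes U \<and> \<sigma> i = p \<and> \<sigma> j = q}"
  have n1: "card U \<ge> 1" using U card_0_eq by fastforce
  have single: "card {\<sigma>. \<sigma> permutes U \<and> \<sigma> i = p'} = (card U - 1) * F" if "p' \<in> U" for p'
  proof -
    have "card {\<sigma>. \<sigma> permutes U \<and> \<sigma> i = p'} = (\<Sum>q'\<in>U-{p'}. F)"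
      unfolding inner_count[OF U(1-4) that] F_def
      by (intro sum.cong refl perm_fiber_eq) (use U that in auto)
    also have "\<dots> = (card U - 1) * F" using U that by simp
    finally show ?thesis .
  qed
  let ?S = "{\<sigma>. \<sigma> permutes U}"
  have fS: "finite ?S" using finite_permutations[OF U(1)] .
  have im: "(\<lambda>\<sigma>. \<sigma> i) ` ?S \<subseteq> U" using U by (auto simp: permutes_in_image)
  have "card ?S = (\<Sum>p'\<in>U. card {x\<in>?S. x i = p'})" by (rule fiber_card[OF fS U(1) im])
  also have "\<dots> = (\<Sum>p'\<in>U. (card U - 1) * F)"
  proof (intro sum.cong refl)
    fix p' assume "p' \<in> U"
    moreover have "{x\<in>?S. x i = p'} = {\<sigma>. \<sigma> permutes U \<and> \<sigma> i = p'}" by auto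
    ultimately show "card {x\<in>?S. x i = p'} = (card U - 1) * F" using single by simp
  qed
  also have "\<dots> = card U * ((card U - 1) * F)" by simp
  finally have c1: "card ?S = card U * ((card U - 1) * F)" .
  have cS: "card ?S = fact (card U)" by (rule card_permutations[OF refl U(1)])
  have "(fact (card U) :: real) = real (fact (card U))" by (simp only: of_nat_fact)
  also have "\<dots> = real (card U * ((card U - 1) * F))" using c1 cS by simp
  also have "\<dots> = real (card U) * ((real (card U) - 1) * real F)" using n1 by (simp add: of_nat_diff)
  finally show ?thesis unfolding F_def[symmetric] by (simp add: algebra_simps)
qed

lemma single_count:
  assumes U: "finite U" "i\<in>U" "j\<in>U" "i\<noteq>j" "p\<in>U"
  shows "real (card {\<sigma>. \<sigma> permutes U \<and> \<sigma> i = p}) * real (card U) = fact (card U)"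
proof -
  obtain q where q: "q \<in> U" "q \<noteq> p" using U by blast
  define F where "F = card {\<sigma>. \<sigma> permutes U \<and> \<sigma> i = p \<and> \<sigma> j = q}"
  have "card {\<sigma>. \<sigma> permutes U \<and> \<sigma> i = p} = (\<Sum>q'\<in>U-{p}. F)"
    unfolding inner_count[OF U(1-5)] F_def
    by (intro sum.cong refl perm_fiber_eq) (use U q in auto)
  also have "\<dots> = (card U - 1) * F" using U by simp
  finally have c: "card {\<sigma>. \<sigma> permutes U \<and> \<sigma> i = p} = (card U - 1) * F" .
  have "card U \<ge> 1" using U card_0_eq by fastforce
  then have "real (card {\<sigma>. \<sigma> permutes U \<and> \<sigma> i = p}) = (real (card U) - 1) * real F"
    using c by (simp add: of_nat_diff)
  note h = this
  have "real (card {\<sigma>. \<sigma> permutes U \<and> \<sigma> i = p}) * real (card U) = real F * (real (card U) * (real (card U) - 1))"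
    unfolding h by (simp add: algebra_simps)
  also have "\<dots> = fact (card U)" unfolding F_def using pair_count[OF U(1-5) q(1)] q(2) by (simp add: eq_commute)
  finally show ?thesis .
qed



lemma two_elems:
  assumes "finite U" "card U \<ge> 2" "i \<in> U"
  obtains j where "j \<in> U" "j \<noteq> i"
proof -
  have "card (U - {i}) \<ge> 1" using assms by (simp add: card_Diff_singleton)
  then have "U - {i} \<noteq> {}" by (metis card.empty not_one_le_zero)
  then show ?thesis using that by blast
qed

lemma sum_ind1:
  assumes U: "finite U" "card U \<ge> 2" "j \<in> U" "A \<subseteq> U"
  shows "(\<Sum>\<sigma>\<in>{\<sigma>. \<sigma> permutes U}. (of_bool (\<sigma> j \<in> A) :: real)) * real (card U) = real (card A) * fact (card U)"
proof -
  obtain j' where j': "j' \<in> U" "j' \<noteq> j" using two_elems[OF U(1-3)] by blast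
  let ?T = "{\<sigma>. \<sigma> permutes U \<and> \<sigma> j \<in> A}"
  have fT: "finite ?T" using finite_permutations[OF U(1)] by (rule rev_finite_subset) blast
  have fA: "finite A" using U(1,4) by (rule finite_subset[rotated])
  have "(\<Sum>\<sigma>\<in>{\<sigma>. \<sigma> permutes U}. (of_bool (\<sigma> j \<in> A) :: real)) = real (card ?T)"
    using finite_permutations[OF U(1)] by (simp add: Int_def)
  also have "card ?T = (\<Sum>p\<in>A. card {x\<in>?T. x j = p})"
    by (rule fiber_card[OF fT fA]) blast
  also have "\<dots> = (\<Sum>p\<in>A. card {\<sigma>. \<sigma> permutes U \<and> \<sigma> j = p})"
    by (intro sum.cong refl arg_cong[where f=card]) blast
  finally have "(\<Sum>\<sigma>\<in>{\<sigma>. \<sigma> permutes U}. (of_bool (\<sigma> j \<in> A) :: real)) * real (card U)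
     = (\<Sum>p\<in>A. real (card {\<sigma>. \<sigma> permutes U \<and> \<sigma> j = p}) * real (card U))"
    by (simp add: sum_distrib_right)
  also have "\<dots> = (\<Sum>p\<in>A. fact (card U))"
    by (intro sum.cong refl single_count[OF U(1,3) j'(1)]) (use j' U in auto)
  finally show ?thesis by simp
qed

lemma sum_ind2:
  assumes U: "finite U" "i \<in> U" "j \<in> U" "i \<noteq> j" "A \<subseteq> U" "B \<subseteq> U"
  shows "(\<Sum>\<sigma>\<in>{\<sigma>. \<sigma> permutes U}. (of_bool (\<sigma> i \<in> A \<and> \<sigma> j \<in> B) :: real)) * (real (card U) * (real (card U) - 1))
     \<le> real (card A) * real (card B) * fact (card U)"
proof -
  let ?T = "{\<sigma>. \<sigma> permutes U \<and> \<sigma> i \<in> A \<and> \<sigma> j \<in> B}"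
  let ?c = "real (card U) * (real (card U) - 1)"
  have c0: "?c \<ge> 0" using U card_0_eq[OF U(1)] by (cases "card U") auto
  have fT: "finite ?T" using finite_permutations[OF U(1)] by (rule rev_finite_subset) blast
  have fA: "finite A" using U(1,5) by (rule finite_subset[rotated])
  have fB: "finite B" using U(1,6) by (rule finite_subset[rotated])
  have "(\<Sum>\<sigma>\<in>{\<sigma>. \<sigma> permutes U}. (of_bool (\<sigma> i \<in> A \<and> \<sigma> j \<in> B) :: real)) = real (card ?T)"
    using finite_permutations[OF U(1)] by (simp add: Int_def)
  also have "card ?T = (\<Sum>pq\<in>A\<times>B. card {x\<in>?T. (x i, x j) = pq})"
    by (rule fiber_card[OF fT]) (use fA fB in auto)
  finally have "(\<Sum>\<sigma>\<in>{\<sigma>. \<sigma> permutes U}. (of_bool (\<sigma> i \<in> A \<and> \<sigma> j \<in> B) :: real)) * ?c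
     = (\<Sum>pq\<in>A\<times>B. real (card {x\<in>?T. (x i, x j) = pq}) * ?c)"
    by (simp add: sum_distrib_right)
  also have "\<dots> \<le> (\<Sum>pq\<in>A\<times>B. fact (card U))"
  proof (rule sum_mono)
    fix pq assume pq: "pq \<in> A \<times> B"
    obtain p q where pq': "pq = (p, q)" by fastforce
    have pU: "p \<in> U" "q \<in> U" using pq pq' U by auto
    have eq: "{x\<in>?T. (x i, x j) = pq} = {\<sigma>. \<sigma> permutes U \<and> \<sigma> i = p \<and> \<sigma> j = q}"
      using pq pq' by auto
    show "real (card {x\<in>?T. (x i, x j) = pq}) * ?c \<le> fact (card U)"
    proof (cases "p = q")
      case True
      have emp: "{\<sigma>. \<sigma> permutes U \<and> \<sigma> i = p \<and> \<sigma> j = q} = {}"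
      proof (rule ccontr)
        assume "{\<sigma>. \<sigma> permutes U \<and> \<sigma> i = p \<and> \<sigma> j = q} \<noteq> {}"
        then obtain \<sigma> where s: "\<sigma> permutes U" "\<sigma> i = p" "\<sigma> j = q" by blast
        then have "inj \<sigma>" using permutes_inj by blast
        from injD[OF this, of i j] s True U(4) show False by simp
      qed
      show ?thesis unfolding eq emp by simp
    next
      case False
      show ?thesis unfolding eq using pair_count[OF U(1-4) pU False] by simp
    qed
  qed
  also have "\<dots> = real (card A) * real (card B) * fact (card U)" by (simp add: card_cartesian_product)
  finally show ?thesis .
qed



lemma alg: fixes n M N :: real assumes "n \<ge> 2"
  shows "M*N/n + M*M*N/(n*(n-1)) = N*(M/n + (M/n)^2*n/(n-1))"
  using assms by (simp add: field_simps power2_eq_square)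

lemma moments:
  fixes U :: "'a set" and D :: "'a set" and A :: "'a \<Rightarrow> 'a set"
  assumes U: "finite U" "card U \<ge> 2" "D \<subseteq> U" "\<And>j. j \<in> D \<Longrightarrow> A j \<subseteq> U"
  defines "X \<equiv> (\<lambda>\<sigma>. \<Sum>j\<in>D. (of_bool (\<sigma> j \<in> A j) :: real))"
  defines "E \<equiv> (\<Sum>j\<in>D. real (card (A j))) / real (card U)"
  shows "(\<Sum>\<sigma>\<in>{\<sigma>. \<sigma> permutes U}. X \<sigma>) = fact (card U) * E"
    and "(\<Sum>\<sigma>\<in>{\<sigma>. \<sigma> permutes U}. (X \<sigma>)^2) \<le> fact (card U) * (E + E^2 * real (card U) / (real (card U) - 1))"
proof -
  let ?S = "{\<sigma>. \<sigma> permutes U}"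
  let ?n = "real (card U)"
  let ?N = "fact (card U) :: real"
  let ?m = "\<lambda>j. real (card (A j))"
  have n2: "?n \<ge> 2" using U(2) by simp
  have fD: "finite D" using U(1,3) by (rule finite_subset[rotated])
  have one: "(\<Sum>\<sigma>\<in>?S. (of_bool (\<sigma> j \<in> A j) :: real)) = ?m j * ?N / ?n" if "j \<in> D" for j
    using sum_ind1[OF U(1,2) _ U(4)[OF that]] that U(3) n2 by (auto simp: field_simps)
  have "(\<Sum>\<sigma>\<in>?S. X \<sigma>) = (\<Sum>j\<in>D. \<Sum>\<sigma>\<in>?S. (of_bool (\<sigma> j \<in> A j) :: real))"
    unfolding X_def by (rule sum.swap)
  also have "\<dots> = (\<Sum>j\<in>D. ?m j * ?N / ?n)" by (intro sum.cong refl one)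
  also have "\<dots> = ?N * E" unfolding E_def by (simp add: sum_divide_distrib[symmetric] sum_distrib_left algebra_simps)
  finally show "(\<Sum>\<sigma>\<in>?S. X \<sigma>) = ?N * E" .
  have two: "(\<Sum>\<sigma>\<in>?S. (of_bool (\<sigma> i \<in> A i) :: real) * of_bool (\<sigma> j \<in> A j))
      \<le> (if i = j then ?m i * ?N / ?n else 0) + ?m i * ?m j * ?N / (?n * (?n - 1))"
    if ij: "i \<in> D" "j \<in> D" for i j
  proof (cases "i = j")
    case True
    have "(\<Sum>\<sigma>\<in>?S. (of_bool (\<sigma> i \<in> A i) :: real) * of_bool (\<sigma> j \<in> A j)) = ?m i * ?N / ?n"
    proof -
      have "(\<Sum>\<sigma>\<in>?S. (of_bool (\<sigma> i \<in> A i) :: real) * of_bool (\<sigma> j \<in> A j)) = (\<Sum>\<sigma>\<in>?S. (of_bool (\<sigma> i \<in> A i) :: real))"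
        using True by (intro sum.cong) auto
      then show ?thesis using one[OF ij(1)] by simp
    qed
    moreover have "?m i * ?m j * ?N / (?n * (?n - 1)) \<ge> 0" using n2 by simp
    ultimately show ?thesis using True by simp
  next
    case False
    have "(\<Sum>\<sigma>\<in>?S. (of_bool (\<sigma> i \<in> A i) :: real) * of_bool (\<sigma> j \<in> A j))
        = (\<Sum>\<sigma>\<in>?S. (of_bool (\<sigma> i \<in> A i \<and> \<sigma> j \<in> A j) :: real))" by (intro sum.cong) auto
    also have "\<dots> \<le> ?m i * ?m j * ?N / (?n * (?n - 1))"
      using sum_ind2[OF U(1) _ _ False U(4)[OF ij(1)] U(4)[OF ij(2)]] ij U(3) n2
      by (auto simp: field_simps)
    finally show ?thesis using False by simp
  qed
  have "(\<Sum>\<sigma>\<in>?S. (X \<sigma>)^2) = (\<Sum>\<sigma>\<in>?S. \<Sum>i\<in>D. \<Sum>j\<in>D. (of_bool (\<sigma> i \<in> A i) :: real) * of_bool (\<sigma> j \<in> A j))"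
    unfolding X_def power2_eq_square sum_product by simp
  also have "\<dots> = (\<Sum>i\<in>D. \<Sum>j\<in>D. \<Sum>\<sigma>\<in>?S. (of_bool (\<sigma> i \<in> A i) :: real) * of_bool (\<sigma> j \<in> A j))"
  proof -
    have "(\<Sum>\<sigma>\<in>?S. \<Sum>i\<in>D. \<Sum>j\<in>D. (of_bool (\<sigma> i \<in> A i) :: real) * of_bool (\<sigma> j \<in> A j))
       = (\<Sum>i\<in>D. \<Sum>\<sigma>\<in>?S. \<Sum>j\<in>D. (of_bool (\<sigma> i \<in> A i) :: real) * of_bool (\<sigma> j \<in> A j))"
      by (rule sum.swap)
    also have "\<dots> = (\<Sum>i\<in>D. \<Sum>j\<in>D. \<Sum>\<sigma>\<in>?S. (of_bool (\<sigma> i \<in> A i) :: real) * of_bool (\<sigma> j \<in> A j))"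
      by (intro sum.cong refl) (rule sum.swap)
    finally show ?thesis .
  qed
  also have "\<dots> \<le> (\<Sum>i\<in>D. \<Sum>j\<in>D. (if i = j then ?m i * ?N / ?n else 0) + ?m i * ?m j * ?N / (?n * (?n - 1)))"
    by (intro sum_mono two)
  also have "\<dots> = (\<Sum>i\<in>D. ?m i * ?N / ?n) + (\<Sum>i\<in>D. \<Sum>j\<in>D. ?m i * ?m j * ?N / (?n * (?n - 1)))"
    by (simp add: sum.distrib fD)
  also have "(\<Sum>i\<in>D. \<Sum>j\<in>D. ?m i * ?m j * ?N / (?n * (?n - 1))) = (\<Sum>i\<in>D. ?m i) * (\<Sum>j\<in>D. ?m j) * ?N / (?n * (?n - 1))"
  proof -
    define K where "K = ?N / (?n * (?n - 1))"
    have "(\<Sum>i\<in>D. \<Sum>j\<in>D. ?m i * ?m j * K) = (\<Sum>i\<in>D. ?m i) * (\<Sum>j\<in>D. ?m j) * K"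
    proof -
      have "(\<Sum>i\<in>D. ?m i) * (\<Sum>j\<in>D. ?m j) = (\<Sum>i\<in>D. \<Sum>j\<in>D. ?m i * ?m j)" by (rule sum_product)
      then show ?thesis by (simp only: sum_distrib_right)
    qed
    then show ?thesis unfolding K_def by simp
  qed
  also have "(\<Sum>i\<in>D. ?m i * ?N / ?n) + (\<Sum>i\<in>D. ?m i) * (\<Sum>j\<in>D. ?m j) * ?N / (?n * (?n - 1))
      = ?N * (E + E^2 * ?n / (?n - 1))"
  proof -
    have "(\<Sum>i\<in>D. ?m i * ?N / ?n) = (\<Sum>i\<in>D. ?m i) * ?N / ?n"
      by (simp add: sum_divide_distrib[symmetric] sum_distrib_right[symmetric])
    then show ?thesis unfolding E_def using alg[OF n2] by simp
  qed
  finally show "(\<Sum>\<sigma>\<in>?S. (X \<sigma>)^2) \<le> ?N * (E + E^2 * ?n / (?n - 1))" .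
qed



lemma nat_interval_card:
  fixes x y :: real assumes "0 \<le> x" "x \<le> y"
  shows "\<bar>real (card {p::nat. x \<le> real p \<and> real p \<le> y}) - (y - x)\<bar> \<le> 1"
proof -
  have cx: "ceiling x \<ge> 0" using assms by simp
  have fy: "floor y \<ge> 0" using assms by simp
  have "{p::nat. x \<le> real p \<and> real p \<le> y} = {nat (ceiling x) .. nat (floor y)}"
  proof (intro set_eqI iffI)
    fix p assume "p \<in> {p::nat. x \<le> real p \<and> real p \<le> y}"
    then have "x \<le> real p" "real p \<le> y" by auto
    then have "ceiling x \<le> int p" "int p \<le> floor y" by (auto intro!: ceiling_le simp: le_floor_iff)
    then show "p \<in> {nat (ceiling x) .. nat (floor y)}" using \<open>x \<le> real p\<close> \<open>real p \<le> y\<close> by auto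
  next
    fix p assume "p \<in> {nat (ceiling x) .. nat (floor y)}"
    then have h1: "x \<le> real p" and h2: "p \<le> nat (floor y)" by auto
    from h2 fy have "int p \<le> floor y" by (simp add: le_nat_iff)
    then have "real p \<le> y" by (simp add: le_floor_iff)
    with h1 show "p \<in> {p::nat. x \<le> real p \<and> real p \<le> y}" by simp
  qed
  moreover have "ceiling x \<le> floor y + 1"
  proof -
    have "real_of_int (ceiling x) < x + 1" by linarith
    moreover have "y < real_of_int (floor y) + 1" by linarith
    ultimately have "real_of_int (ceiling x) < real_of_int (floor y) + 2" using assms by linarith
    then show ?thesis by linarith
  qed
  ultimately have "real (card {p::nat. x \<le> real p \<and> real p \<le> y}) = real_of_int (floor y) + 1 - real_of_int (ceiling x)"
  proof -
    assume eq: "{p::nat. x \<le> real p \<and> real p \<le> y} = {nat (ceiling x) .. nat (floor y)}"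
      and le0: "ceiling x \<le> floor y + 1"
    have le: "nat (ceiling x) \<le> Suc (nat (floor y))" using le0 cx fy by arith
    have "real (card {p::nat. x \<le> real p \<and> real p \<le> y}) = real (Suc (nat (floor y)) - nat (ceiling x))"
      unfolding eq by simp
    also have "\<dots> = real (Suc (nat (floor y))) - real (nat (ceiling x))" using le by (rule of_nat_diff)
    also have "\<dots> = real_of_int (floor y) + 1 - real_of_int (ceiling x)" using cx fy by simp
    finally show ?thesis .
  qed
  moreover have "real_of_int (floor y) \<le> y" "y < real_of_int (floor y) + 1" by linarith+
  moreover have "x \<le> real_of_int (ceiling x)" "real_of_int (ceiling x) < x + 1" by linarith+
  ultimately show ?thesis by linarith
qed



lemma alg2: fixes n M e a d :: real assumes "n > 0"
  shows "M / n - 2 * e * a = (M - d * (2 * a)) / n + 2 * a * (d - e * n) / n"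
  using assms by (simp add: field_simps)

lemma alg3: fixes n N E c :: real assumes "n \<ge> 2"
  shows "N * (E + E^2 * n / (n - 1)) - 2 * c * (N * E) + c^2 * N = N * (E + (E - c)^2 + E^2 / (n - 1))"
  using assms by (simp add: field_simps power2_eq_square)

lemma alg4: fixes a b d e :: real assumes "b > 0" "d > 0"
  shows "a * d \<le> e * b \<Longrightarrow> a / b \<le> e / d"
  using assms by (simp add: field_simps)

lemma alg5: fixes c k Z :: real assumes "c > 0" "k > 0"
  shows "((c + 3) + 9 + Z) / (k^2 * c) = 1 / k^2 + (12 + Z) / (k^2 * c)"
  using assms by (simp add: field_simps power2_eq_square)

lemma main_bound:
  fixes \<epsilon> \<alpha> k :: real and n :: nat
  assumes "0 < \<epsilon>" "\<epsilon> < 1" "0 < \<alpha>" "0 < k" and n2: "n \<ge> 2"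
    and big: "\<alpha> * sqrt (real n * ln (real n)) + 1 \<le> real n * (1 - \<epsilon>) / 2"
  shows "unif_prob n (\<lambda>\<sigma>.
            \<bar>real (card (tri \<epsilon> \<alpha> n \<sigma>)) - 2 * \<epsilon> * \<alpha> * sqrt (real n * ln (real n))\<bar>
              \<ge> k * sqrt (2 * \<epsilon> * \<alpha>) * (real n * ln (real n)) powr (1/4))
    \<le> 1 / k^2 + (12 + (2 * \<epsilon> * \<alpha> * sqrt (real n * ln (real n)) + 3)^2 / (real n - 1))
          / (k^2 * (2 * \<epsilon> * \<alpha> * sqrt (real n * ln (real n))))"
proof -
  define U where "U = {1..n}"
  define a where "a = \<alpha> * sqrt (real n * ln (real n))"
  define c where "c = 2 * \<epsilon> * \<alpha> * sqrt (real n * ln (real n))"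
  define t where "t = k * sqrt (2 * \<epsilon> * \<alpha>) * (real n * ln (real n)) powr (1/4)"
  define D where "D = Dn \<epsilon> n"
  define A where "A = (\<lambda>j::nat. {p\<in>U. \<bar>real p - real j\<bar> \<le> a})"
  define X where "X = (\<lambda>\<sigma>::nat\<Rightarrow>nat. \<Sum>j\<in>D. (of_bool (\<sigma> j \<in> A j) :: real))"
  define E where "E = (\<Sum>j\<in>D. real (card (A j))) / real (card U)"
  define N where "N = (fact n :: real)"
  let ?S = "{\<sigma>. \<sigma> permutes U}"
  have rn: "real n \<ge> 2" using n2 by simp
  have lnpos: "ln (real n) > 0" using rn by simp
  have nl: "real n * ln (real n) > 0" using rn lnpos by simp
  have a0: "a > 0" unfolding a_def using nl assms(3) by simp
  have ca: "c = 2 * \<epsilon> * a" unfolding c_def a_def by simp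
  have c0: "c > 0" using ca a0 assms(1) by simp
  have t2: "t^2 = k^2 * c"
  proof -
    have "((real n * ln (real n)) powr (1/4))^2 = (real n * ln (real n)) powr (1/4) * (real n * ln (real n)) powr (1/4)"
      by (simp add: power2_eq_square)
    also have "\<dots> = (real n * ln (real n)) powr (1/2)" by (simp add: powr_add[symmetric])
    also have "\<dots> = sqrt (real n * ln (real n))" using nl by (simp add: powr_half_sqrt)
    finally have p: "((real n * ln (real n)) powr (1/4))^2 = sqrt (real n * ln (real n))" .
    have "t^2 = k^2 * (sqrt (2 * \<epsilon> * \<alpha>))^2 * ((real n * ln (real n)) powr (1/4))^2"
      unfolding t_def by (simp add: power_mult_distrib)
    also have "\<dots> = k^2 * c" unfolding p c_def using assms by simp
    finally show ?thesis .
  qed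
  have t0: "t \<ge> 0" unfolding t_def using assms by simp
  have cardU: "card U = n" unfolding U_def by simp
  have finU: "finite U" unfolding U_def by simp
  have DU: "D \<subseteq> U" unfolding D_def Dn_def U_def by auto
  have AU: "A j \<subseteq> U" for j unfolding A_def by auto
  have cardS: "card ?S = fact n" using card_permutations[OF cardU finU] .
  have finS: "finite ?S" using finite_permutations[OF finU] .
  have triX: "real (card (tri \<epsilon> \<alpha> n \<sigma>)) = X \<sigma>" if s: "\<sigma> permutes U" for \<sigma>
  proof -
    have fD: "finite D" using finU DU by (rule finite_subset[rotated])
    have "tri \<epsilon> \<alpha> n \<sigma> = D \<inter> {j. \<sigma> j \<in> A j}"
    proof (intro set_eqI iffI)
      fix j assume "j \<in> tri \<epsilon> \<alpha> n \<sigma>"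
      then have j: "j \<in> D" "\<bar>real (\<sigma> j) - real j\<bar> \<le> a" unfolding tri_def D_def a_def by auto
      then have "\<sigma> j \<in> U" using s DU by (auto simp: permutes_in_image)
      then show "j \<in> D \<inter> {j. \<sigma> j \<in> A j}" using j unfolding A_def by auto
    next
      fix j assume "j \<in> D \<inter> {j. \<sigma> j \<in> A j}"
      then show "j \<in> tri \<epsilon> \<alpha> n \<sigma>" unfolding tri_def D_def A_def a_def by auto
    qed
    then show ?thesis unfolding X_def using fD by simp
  qed
  have mom1: "(\<Sum>\<sigma>\<in>?S. X \<sigma>) = N * E"
    using moments(1)[OF finU _ DU AU] n2 cardU unfolding X_def E_def N_def by simp
  have mom2: "(\<Sum>\<sigma>\<in>?S. (X \<sigma>)^2) \<le> N * (E + E^2 * real n / (real n - 1))"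
    using moments(2)[OF finU _ DU AU] n2 cardU unfolding X_def E_def N_def by simp
  have mj: "\<bar>real (card (A j)) - 2 * a\<bar> \<le> 1" if j: "j \<in> D" for j
  proof -
    have j1: "real n * (1 - \<epsilon>) / 2 \<le> real j" "real j \<le> real n * (1 + \<epsilon>) / 2"
      using j unfolding D_def Dn_def by auto
    have lo: "real j - a \<ge> 1" using j1 big unfolding a_def by linarith
    have hi: "real j + a \<le> real n" using j1 big unfolding a_def by (simp add: field_simps)
    have "A j = {p::nat. real j - a \<le> real p \<and> real p \<le> real j + a}"
      unfolding A_def U_def using lo hi by (auto simp: abs_le_iff)
    then show ?thesis using nat_interval_card[of "real j - a" "real j + a"] lo a0 by simp
  qed
  have dD: "\<bar>real (card D) - \<epsilon> * real n\<bar> \<le> 1"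
  proof -
    have lo: "real n * (1 - \<epsilon>) / 2 \<ge> 1" using big a0 unfolding a_def by linarith
    have hi: "real n * (1 + \<epsilon>) / 2 \<le> real n" using assms rn by (simp add: field_simps)
    have "D = {p::nat. real n * (1 - \<epsilon>) / 2 \<le> real p \<and> real p \<le> real n * (1 + \<epsilon>) / 2}"
      unfolding D_def Dn_def using lo hi by auto
    moreover have "real n * (1 + \<epsilon>) / 2 - real n * (1 - \<epsilon>) / 2 = \<epsilon> * real n" by (simp add: field_simps)
    ultimately show ?thesis using nat_interval_card[of "real n * (1 - \<epsilon>) / 2" "real n * (1 + \<epsilon>) / 2"] lo assms
      by (simp add: field_simps)
  qed
  have an: "2 * a \<le> real n"
  proof -
    have h1: "a + 1 \<le> real n * (1 - \<epsilon>) / 2" using big unfolding a_def .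
    have h2: "real n * (1 - \<epsilon>) / 2 = real n / 2 - \<epsilon> * real n / 2" by (simp add: field_simps)
    have h3: "\<epsilon> * real n \<ge> 0" using assms(1) by simp
    show ?thesis using h1 h2 h3 by linarith
  qed
  have Ec: "\<bar>E - c\<bar> \<le> 3"
  proof -
    have s1: "\<bar>(\<Sum>j\<in>D. real (card (A j)) - 2 * a)\<bar> \<le> real (card D)"
    proof -
      have "\<bar>(\<Sum>j\<in>D. real (card (A j)) - 2 * a)\<bar> \<le> (\<Sum>j\<in>D. \<bar>real (card (A j)) - 2 * a\<bar>)"
        by (rule sum_abs)
      also have "\<dots> \<le> (\<Sum>j\<in>D. 1)" by (intro sum_mono mj)
      finally show ?thesis by simp
    qed
    have eqE: "E - c = (\<Sum>j\<in>D. real (card (A j)) - 2 * a) / real n + 2 * a * (real (card D) - \<epsilon> * real n) / real n"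
    proof -
      have "(\<Sum>j\<in>D. real (card (A j)) - 2 * a) = (\<Sum>j\<in>D. real (card (A j))) - real (card D) * (2 * a)"
        by (simp add: sum_subtractf)
      then show ?thesis unfolding E_def cardU ca using alg2[of "real n" "\<Sum>j\<in>D. real (card (A j))" \<epsilon> a "real (card D)"] rn by simp
    qed
    have b1: "\<bar>(\<Sum>j\<in>D. real (card (A j)) - 2 * a) / real n\<bar> \<le> real (card D) / real n"
    proof -
      have "\<bar>(\<Sum>j\<in>D. real (card (A j)) - 2 * a) / real n\<bar> = \<bar>(\<Sum>j\<in>D. real (card (A j)) - 2 * a)\<bar> / real n"
        using rn by (simp add: abs_divide)
      also have "\<dots> \<le> real (card D) / real n" using s1 rn by (intro divide_right_mono) auto
      finally show ?thesis .
    qed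
    have b2: "real (card D) / real n \<le> 2"
    proof -
      have "\<epsilon> * real n \<le> 1 * real n" using assms(2) rn by (intro mult_right_mono) auto
      then have "real (card D) \<le> 2 * real n" using dD rn by linarith
      then show ?thesis using rn by (simp add: divide_le_eq)
    qed
    have b3: "\<bar>2 * a * (real (card D) - \<epsilon> * real n) / real n\<bar> \<le> 1"
    proof -
      have "\<bar>2 * a * (real (card D) - \<epsilon> * real n)\<bar> = 2 * a * \<bar>real (card D) - \<epsilon> * real n\<bar>"
        using a0 by (simp add: abs_mult)
      also have "\<dots> \<le> 2 * a * 1" using dD a0 by (intro mult_left_mono) auto
      also have "\<dots> \<le> real n" using an by simp
      finally have "\<bar>2 * a * (real (card D) - \<epsilon> * real n)\<bar> \<le> real n" .
      then show ?thesis using rn by (simp add: abs_divide divide_le_eq)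
    qed
    have "\<bar>E - c\<bar> \<le> \<bar>(\<Sum>j\<in>D. real (card (A j)) - 2 * a) / real n\<bar> + \<bar>2 * a * (real (card D) - \<epsilon> * real n) / real n\<bar>"
      unfolding eqE by (rule abs_triangle_ineq)
    then show ?thesis using b1 b2 b3 by linarith
  qed
  have E0: "E \<ge> 0" unfolding E_def by (intro divide_nonneg_nonneg sum_nonneg) auto
  define Ev where "Ev = {\<sigma>. \<sigma> permutes U \<and> \<bar>real (card (tri \<epsilon> \<alpha> n \<sigma>)) - c\<bar> \<ge> t}"
  have EvS: "Ev \<subseteq> ?S" unfolding Ev_def by blast
  have "real (card Ev) * t^2 = (\<Sum>\<sigma>\<in>Ev. t^2)" by simp
  also have "\<dots> \<le> (\<Sum>\<sigma>\<in>Ev. (X \<sigma> - c)^2)"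
  proof (rule sum_mono)
    fix \<sigma> assume "\<sigma> \<in> Ev"
    then have s: "\<sigma> permutes U" "\<bar>real (card (tri \<epsilon> \<alpha> n \<sigma>)) - c\<bar> \<ge> t" unfolding Ev_def by blast+
    then have "\<bar>X \<sigma> - c\<bar> \<ge> t" using triX[OF s(1)] by simp
    then have "t^2 \<le> \<bar>X \<sigma> - c\<bar>^2" using t0 by (rule power_mono)
    then show "t^2 \<le> (X \<sigma> - c)^2" by simp
  qed
  also have "\<dots> \<le> (\<Sum>\<sigma>\<in>?S. (X \<sigma> - c)^2)"
    by (rule sum_mono2[OF finS EvS]) simp
  also have "\<dots> = (\<Sum>\<sigma>\<in>?S. (X \<sigma>)^2 - 2 * c * X \<sigma> + c^2)"
    by (intro sum.cong refl) (simp add: power2_eq_square algebra_simps)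
  also have "\<dots> = (\<Sum>\<sigma>\<in>?S. (X \<sigma>)^2) - 2 * c * (\<Sum>\<sigma>\<in>?S. X \<sigma>) + c^2 * real (card ?S)"
    by (simp add: sum.distrib sum_subtractf sum_distrib_left)
  also have "\<dots> = (\<Sum>\<sigma>\<in>?S. (X \<sigma>)^2) - 2 * c * (N * E) + c^2 * N"
    unfolding mom1 cardS N_def by simp
  also have "\<dots> \<le> N * (E + E^2 * real n / (real n - 1)) - 2 * c * (N * E) + c^2 * N"
    using mom2 by linarith
  also have "\<dots> = N * (E + (E - c)^2 + E^2 / (real n - 1))"
    using alg3[OF rn] .
  also have "\<dots> \<le> N * ((c + 3) + 9 + (c + 3)^2 / (real n - 1))"
  proof -
    have e1: "E \<le> c + 3" using Ec by linarith
    have "\<bar>E - c\<bar>^2 \<le> 3^2" using Ec by (rule power_mono) simp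
    then have e2: "(E - c)^2 \<le> 9" by simp
    have "E^2 \<le> (c+3)^2" using E0 e1 by (rule power_mono[rotated])
    then have e3: "E^2 / (real n - 1) \<le> (c+3)^2 / (real n - 1)" using rn by (intro divide_right_mono) auto
    have N0: "N > 0" unfolding N_def by simp
    have "E + (E - c)^2 + E^2 / (real n - 1) \<le> (c + 3) + 9 + (c + 3)^2 / (real n - 1)"
      using e1 e2 e3 by linarith
    then show ?thesis using N0 by (intro mult_left_mono) auto
  qed
  finally have cheb: "real (card Ev) * t^2 \<le> N * ((c + 3) + 9 + (c + 3)^2 / (real n - 1))" .
  have "unif_prob n (\<lambda>\<sigma>. \<bar>real (card (tri \<epsilon> \<alpha> n \<sigma>)) - 2 * \<epsilon> * \<alpha> * sqrt (real n * ln (real n))\<bar>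
              \<ge> k * sqrt (2 * \<epsilon> * \<alpha>) * (real n * ln (real n)) powr (1/4)) = real (card Ev) / real (card ?S)"
    unfolding unif_prob_def Ev_def c_def t_def U_def by (rule refl)
  also have "\<dots> = real (card Ev) / N" unfolding cardS N_def by simp
  also have "\<dots> \<le> ((c + 3) + 9 + (c + 3)^2 / (real n - 1)) / (k^2 * c)"
  proof -
    have N0: "N > 0" unfolding N_def by simp
    have kc: "k^2 * c > 0" using c0 assms by simp
    from cheb have "real (card Ev) * (k^2 * c) \<le> ((c + 3) + 9 + (c + 3)^2 / (real n - 1)) * N"
      unfolding t2 by (simp only: mult.commute)
    then show ?thesis using alg4[OF N0 kc] by blast
  qed
  also have "\<dots> = 1 / k^2 + (12 + (c + 3)^2 / (real n - 1)) / (k^2 * c)"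
    using alg5[OF c0 assms(4)] .
  finally show ?thesis unfolding c_def .
qed



theorem lemma1:
  fixes \<epsilon> \<alpha> k :: real
  assumes "0 < \<epsilon>" "\<epsilon> < 1" "0 < \<alpha>" "0 < k"
  shows "limsup (\<lambda>n. ereal (unif_prob n (\<lambda>\<sigma>.
            \<bar>real (card (tri \<epsilon> \<alpha> n \<sigma>)) - 2 * \<epsilon> * \<alpha> * sqrt (real n * ln (real n))\<bar>
              \<ge> k * sqrt (2 * \<epsilon> * \<alpha>) * (real n * ln (real n)) powr (1/4))))
         \<le> ereal (1 / k^2)"
proof -
  define h where "h = (\<lambda>n::nat. (12 + (2 * \<epsilon> * \<alpha> * sqrt (real n * ln (real n)) + 3)^2 / (real n - 1))
          / (k^2 * (2 * \<epsilon> * \<alpha> * sqrt (real n * ln (real n)))))"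
  have h0: "(h \<longlongrightarrow> 0) sequentially" unfolding h_def using assms by real_asymp
  have ev1: "eventually (\<lambda>n::nat. \<alpha> * sqrt (real n * ln (real n)) + 1 \<le> real n * (1 - \<epsilon>) / 2) sequentially"
    using assms by real_asymp
  have ev2: "eventually (\<lambda>n::nat. n \<ge> 2) sequentially" by (rule eventually_ge_at_top)
  have "limsup (\<lambda>n. ereal (unif_prob n (\<lambda>\<sigma>.
            \<bar>real (card (tri \<epsilon> \<alpha> n \<sigma>)) - 2 * \<epsilon> * \<alpha> * sqrt (real n * ln (real n))\<bar>
              \<ge> k * sqrt (2 * \<epsilon> * \<alpha>) * (real n * ln (real n)) powr (1/4))))
        \<le> limsup (\<lambda>n. ereal (1 / k^2 + h n))"
  proof (rule Limsup_mono)
    show "\<forall>\<^sub>F n in sequentially. ereal (unif_prob n (\<lambda>\<sigma>.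
            \<bar>real (card (tri \<epsilon> \<alpha> n \<sigma>)) - 2 * \<epsilon> * \<alpha> * sqrt (real n * ln (real n))\<bar>
              \<ge> k * sqrt (2 * \<epsilon> * \<alpha>) * (real n * ln (real n)) powr (1/4))) \<le> ereal (1 / k^2 + h n)"
      using ev1 ev2
    proof eventually_elim
      case (elim n)
      show ?case unfolding h_def using main_bound[OF assms elim(2) elim(1)] by simp
    qed
  qed
  also have "limsup (\<lambda>n. ereal (1 / k^2 + h n)) = ereal (1 / k^2)"
  proof (rule lim_imp_Limsup)
    show "\<not> trivial_limit (sequentially :: nat filter)" by simp
    have "((\<lambda>n. 1 / k^2 + h n) \<longlongrightarrow> 1 / k^2 + 0) sequentially"
      by (intro tendsto_add tendsto_const h0)
    then show "((\<lambda>n. ereal (1 / k^2 + h n)) \<longlongrightarrow> ereal (1 / k^2)) sequentially"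
      by (simp add: lim_ereal)
  qed
  finally show ?thesis .
qed

end
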